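(* There exists a constant $C_\Gamma$ depending only on $\Gamma$ such that, for $n$ large enough and every realization, $$\sup_{t\in[0,T]}\|C^n_t\|_{-3}\le T\,C_\Gamma\big(S_n^{(ij,ik)}+S_n^{(ij,jk)}\big),$$ where $\|\cdot\|_{-3}$ is the norm of $H^{-3}(\mathbb T^2)$.
   Context: $\mathbb T=\mathbb R/2\pi\mathbb Z$, $\Gamma\in C^\infty(\mathbb T^2)$, $T>0$. For $n\ge2$, $p_n\in(0,1]$, $\xi^{(n)}_{ij}\in\{0,1\}$, $\hat\xi^{(n)}_{ij}=\xi^{(n)}_{ij}/p_n-1$. Let $t\mapsto(\theta^{1,n}_t,\dots,\theta^{n,n}_t)$ be continuous $\mathbb T^n$-valued paths (e.g. the solution of $d\theta^{i,n}_t=\frac1{np_n}\sum_j\xi^{(n)}_{ij}\Gamma(\theta^{i,n}_t,\theta^{j,n}_t)dt+dB^i_t$). For test functions $g$ on $\mathbb T^2$, $C^n_t(g)=\int_0^t\frac1{n^3}\sum_{i,j,k}\hat\xi^{(n)}_{ij}\hat\xi^{(n)}_{ik}\partial_{\theta_1}g(\theta^{i,n}_s,\theta^{j,n}_s)\Gamma(\theta^{i,n}_s,\theta^{k,n}_s)ds+\int_0^t\frac1{n^3}\sum_{i,j,k}\hat\xi^{(n)}_{ij}\hat\xi^{(n)}_{jk}\partial_{\theta_2}g(\theta^{i,n}_s,\theta^{j,n}_s)\Gamma(\theta^{j,n}_s,\theta^{k,n}_s)ds$. Define $S_n^{(ij,ik)}=\sup_{r,s,t\in\{\pm1\}^n}\big|\frac1{n^3}\sum_{i,j,k}\hat\xi^{(n)}_{ij}\hat\xi^{(n)}_{ik}r_is_jt_k\big|$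 and $S_n^{(ij,jk)}=\sup_{r,s,t\in\{\pm1\}^n}\big|\frac1{n^3}\sum_{i,j,k}\hat\xi^{(n)}_{ij}\hat\xi^{(n)}_{jk}r_is_jt_k\big|$. *)

theory Defs
  imports "HOL-Analysis.Analysis"
begin

text \<open>Functions on the torus T^2 are represented as 2pi-periodic functions on R x R.\<close>

definition d1 :: "(real \<times> real \<Rightarrow> real) \<Rightarrow> real \<times> real \<Rightarrow> real" where
  "d1 g = (\<lambda>(x, y). deriv (\<lambda>u. g (u, y)) x)"

definition d2 :: "(real \<times> real \<Rightarrow> real) \<Rightarrow> real \<times> real \<Rightarrow> real" where
  "d2 g = (\<lambda>(x, y). deriv (\<lambda>v. g (x, v)) y)"

text \<open>Iterated partial derivative: True = derivative in the first variable, False = second.\<close>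
fun pd :: "bool list \<Rightarrow> (real \<times> real \<Rightarrow> real) \<Rightarrow> real \<times> real \<Rightarrow> real" where
  "pd [] g = g"
| "pd (True # ds) g = d1 (pd ds g)"
| "pd (False # ds) g = d2 (pd ds g)"

definition pdiff :: "nat \<Rightarrow> nat \<Rightarrow> (real \<times> real \<Rightarrow> real) \<Rightarrow> real \<times> real \<Rightarrow> real" where
  "pdiff a b g = pd (replicate a True @ replicate b False) g"

definition periodic_T2 :: "(real \<times> real \<Rightarrow> real) \<Rightarrow> bool" where
  "periodic_T2 g \<longleftrightarrow> (\<forall>x y. g (x + 2*pi, y) = g (x, y) \<and> g (x, y + 2*pi) = g (x, y))"

definition smooth_T2 :: "(real \<times> real \<Rightarrow> real) \<Rightarrow> bool" where
  "smooth_T2 g \<longleftrightarrow> periodic_T2 g \<and>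
     (\<forall>ds. continuous_on UNIV (pd ds g) \<and>
        (\<forall>x y. (\<lambda>u. pd ds g (u, y)) differentiable (at x) \<and>
               (\<lambda>v. pd ds g (x, v)) differentiable (at y)))"

definition H3_norm :: "(real \<times> real \<Rightarrow> real) \<Rightarrow> real" where
  "H3_norm g = sqrt (\<Sum>a\<le>3. \<Sum>b\<le>3 - a.
       integral (cbox (0, 0) (2*pi, 2*pi)) (\<lambda>z. (pdiff a b g z)\<^sup>2))"

definition Hm3_norm :: "((real \<times> real \<Rightarrow> real) \<Rightarrow> real) \<Rightarrow> ereal" where
  "Hm3_norm L = (SUP g \<in> {g. smooth_T2 g \<and> H3_norm g \<le> 1}. ereal \<bar>L g\<bar>)"

definition xhat :: "real \<Rightarrow> (nat \<Rightarrow> nat \<Rightarrow> real) \<Rightarrow> nat \<Rightarrow> nat \<Rightarrow> real" where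
  "xhat p \<xi> i j = \<xi> i j / p - 1"

definition signs :: "nat \<Rightarrow> (nat \<Rightarrow> real) set" where
  "signs n = PiE {..<n} (\<lambda>_. {-1, 1})"

definition S_ijik :: "nat \<Rightarrow> real \<Rightarrow> (nat \<Rightarrow> nat \<Rightarrow> real) \<Rightarrow> real" where
  "S_ijik n p \<xi> = Sup ((\<lambda>(r, s, t). \<bar>1 / real n ^ 3 *
      (\<Sum>i<n. \<Sum>j<n. \<Sum>k<n. xhat p \<xi> i j * xhat p \<xi> i k * r i * s j * t k)\<bar>)
      ` (signs n \<times> signs n \<times> signs n))"

definition S_ijjk :: "nat \<Rightarrow> real \<Rightarrow> (nat \<Rightarrow> nat \<Rightarrow> real) \<Rightarrow> real" where
  "S_ijjk n p \<xi> = Sup ((\<lambda>(r, s, t). \<bar>1 / real n ^ 3 *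
      (\<Sum>i<n. \<Sum>j<n. \<Sum>k<n. xhat p \<xi> i j * xhat p \<xi> j k * r i * s j * t k)\<bar>)
      ` (signs n \<times> signs n \<times> signs n))"

text \<open>C^n_t(g); theta i s is (a real lift of) the position of particle i at time s.\<close>
definition Cn :: "nat \<Rightarrow> real \<Rightarrow> (nat \<Rightarrow> nat \<Rightarrow> real) \<Rightarrow> (nat \<Rightarrow> real \<Rightarrow> real)
    \<Rightarrow> (real \<times> real \<Rightarrow> real) \<Rightarrow> real \<Rightarrow> (real \<times> real \<Rightarrow> real) \<Rightarrow> real" where
  "Cn n p \<xi> \<theta> \<Gamma> t g =
     integral {0..t} (\<lambda>s. 1 / real n ^ 3 * (\<Sum>i<n. \<Sum>j<n. \<Sum>k<n.
        xhat p \<xi> i j * xhat p \<xi> i k * pdiff 1 0 g (\<theta> i s, \<theta> j s) * \<Gamma> (\<theta> i s, \<theta> k s)))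
   + integral {0..t} (\<lambda>s. 1 / real n ^ 3 * (\<Sum>i<n. \<Sum>j<n. \<Sum>k<n.
        xhat p \<xi> i j * xhat p \<xi> j k * pdiff 0 1 g (\<theta> i s, \<theta> j s) * \<Gamma> (\<theta> j s, \<theta> k s)))"

end

theory Submission
  imports Defs
begin

definition Sg :: "nat \<Rightarrow> (nat \<Rightarrow> nat \<Rightarrow> nat \<Rightarrow> real) \<Rightarrow> real" where
  "Sg n Tt = Sup ((\<lambda>(r, s, t). \<bar>1 / real n ^ 3 *
      (\<Sum>i<n. \<Sum>j<n. \<Sum>k<n. Tt i j k * r i * s j * t k)\<bar>)
      ` (signs n \<times> signs n \<times> signs n))"

lemma S_ijik_Sg: "S_ijik n p \<xi> = Sg n (\<lambda>i j k. xhat p \<xi> i j * xhat p \<xi> i k)"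
  unfolding S_ijik_def Sg_def by simp

lemma S_ijjk_Sg: "S_ijjk n p \<xi> = Sg n (\<lambda>i j k. xhat p \<xi> i j * xhat p \<xi> j k)"
  unfolding S_ijjk_def Sg_def by simp

lemma signs_finite: "finite (signs n)"
  unfolding signs_def by (simp add: finite_PiE)

lemma lin_sign:
  fixes c u :: "nat \<Rightarrow> real"
  assumes "\<forall>i<n. \<bar>u i\<bar> \<le> 1"
  shows "\<exists>r\<in>signs n. \<bar>\<Sum>i<n. u i * c i\<bar> \<le> \<bar>\<Sum>i<n. r i * c i\<bar>"
proof -
  define r :: "nat \<Rightarrow> real" where "r i = (if i < n then (if c i \<ge> 0 then 1 else -1) else undefined)" for i :: nat
  have rs: "r \<in> signs n" unfolding signs_def r_def by (auto simp: PiE_def extensional_def)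
  have "\<bar>\<Sum>i<n. u i * c i\<bar> \<le> (\<Sum>i<n. \<bar>u i * c i\<bar>)" by (rule sum_abs)
  also have "\<dots> \<le> (\<Sum>i<n. \<bar>c i\<bar>)"
  proof (rule sum_mono)
    fix i assume "i \<in> {..<n}"
    then have "\<bar>u i\<bar> \<le> 1" using assms by auto
    then show "\<bar>u i * c i\<bar> \<le> \<bar>c i\<bar>" by (simp add: abs_mult mult_left_le_one_le)
  qed
  also have "\<dots> = (\<Sum>i<n. r i * c i)" by (rule sum.cong) (auto simp: r_def)
  also have "\<dots> \<le> \<bar>\<Sum>i<n. r i * c i\<bar>" by simp
  finally show ?thesis using rs by blast
qed

definition Q3 :: "nat \<Rightarrow> (nat \<Rightarrow> nat \<Rightarrow> nat \<Rightarrow> real) \<Rightarrow> (nat \<Rightarrow> real) \<Rightarrow> (nat \<Rightarrow> real) \<Rightarrow> (nat \<Rightarrow> real) \<Rightarrow> real" where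
  "Q3 n Tt u v w = (\<Sum>i<n. \<Sum>j<n. \<Sum>k<n. Tt i j k * u i * v j * w k)"

lemma Q3_u: "Q3 n Tt u v w = (\<Sum>i<n. u i * (\<Sum>j<n. \<Sum>k<n. Tt i j k * v j * w k))"
  unfolding Q3_def by (simp add: sum_distrib_left mult_ac)

lemma Q3_v: "Q3 n Tt u v w = (\<Sum>j<n. v j * (\<Sum>i<n. \<Sum>k<n. Tt i j k * u i * w k))"
proof -
  have "Q3 n Tt u v w = (\<Sum>j<n. \<Sum>i<n. \<Sum>k<n. Tt i j k * u i * v j * w k)"
    unfolding Q3_def by (rule sum.swap)
  then show ?thesis by (simp add: sum_distrib_left mult_ac)
qed

lemma Q3_w: "Q3 n Tt u v w = (\<Sum>k<n. w k * (\<Sum>i<n. \<Sum>j<n. Tt i j k * u i * v j))"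
proof -
  have "Q3 n Tt u v w = (\<Sum>i<n. \<Sum>k<n. \<Sum>j<n. Tt i j k * u i * v j * w k)"
    unfolding Q3_def by (intro sum.cong refl sum.swap)
  also have "\<dots> = (\<Sum>k<n. \<Sum>i<n. \<Sum>j<n. Tt i j k * u i * v j * w k)"
    by (rule sum.swap)
  finally show ?thesis by (simp add: sum_distrib_left mult_ac)
qed

lemma Sg_upper:
  assumes "r \<in> signs n" "s \<in> signs n" "t \<in> signs n"
  shows "\<bar>Q3 n Tt r s t\<bar> \<le> real n ^ 3 * Sg n Tt"
proof (cases "n = 0")
  case True then show ?thesis
    using assms unfolding Q3_def Sg_def
    by simp
next
  case False
  let ?A = "((\<lambda>(r, s, t). \<bar>1 / real n ^ 3 *
      (\<Sum>i<n. \<Sum>j<n. \<Sum>k<n. Tt i j k * r i * s j * t k)\<bar>)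
      ` (signs n \<times> signs n \<times> signs n))"
  have fin: "finite ?A" by (intro finite_imageI finite_SigmaI signs_finite)
  have mem: "\<bar>1 / real n ^ 3 * Q3 n Tt r s t\<bar> \<in> ?A"
    unfolding Q3_def using assms by (intro image_eqI[where x="(r,s,t)"]) auto
  have "\<bar>1 / real n ^ 3 * Q3 n Tt r s t\<bar> \<le> Sg n Tt"
    unfolding Sg_def by (rule cSup_upper[OF mem bdd_above_finite[OF fin]])
  moreover have "real n ^ 3 > 0" using False by simp
  ultimately show ?thesis by (simp add: abs_mult field_simps)
qed

lemma Sg_nonneg: "Sg n Tt \<ge> 0"
proof -
  let ?A = "((\<lambda>(r, s, t). \<bar>1 / real n ^ 3 *
      (\<Sum>i<n. \<Sum>j<n. \<Sum>k<n. Tt i j k * r i * s j * t k)\<bar>)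
      ` (signs n \<times> signs n \<times> signs n))"
  have fin: "finite ?A" by (intro finite_imageI finite_SigmaI signs_finite)
  obtain r where r: "r \<in> signs n"
    unfolding signs_def by (metis PiE_eq_empty_iff empty_iff insert_iff ex_in_conv)
  have mem: "\<bar>1 / real n ^ 3 * Q3 n Tt r r r\<bar> \<in> ?A"
    unfolding Q3_def using r by (intro image_eqI[where x="(r,r,r)"]) auto
  have "\<bar>1 / real n ^ 3 * Q3 n Tt r r r\<bar> \<le> Sg n Tt"
    unfolding Sg_def by (rule cSup_upper[OF mem bdd_above_finite[OF fin]])
  then show ?thesis by linarith
qed

lemma tri_bound:
  assumes "\<forall>i<n. \<bar>u i\<bar> \<le> 1" "\<forall>i<n. \<bar>v i\<bar> \<le> 1" "\<forall>i<n. \<bar>w i\<bar> \<le> 1"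
  shows "\<bar>Q3 n Tt u v w\<bar> \<le> real n ^ 3 * Sg n Tt"
proof -
  obtain r where r: "r \<in> signs n" "\<bar>Q3 n Tt u v w\<bar> \<le> \<bar>Q3 n Tt r v w\<bar>"
    using lin_sign[OF assms(1), of "\<lambda>i. \<Sum>j<n. \<Sum>k<n. Tt i j k * v j * w k"]
    by (metis Q3_u)
  obtain s where s: "s \<in> signs n" "\<bar>Q3 n Tt r v w\<bar> \<le> \<bar>Q3 n Tt r s w\<bar>"
    using lin_sign[OF assms(2), of "\<lambda>j. \<Sum>i<n. \<Sum>k<n. Tt i j k * r i * w k"]
    by (metis Q3_v)
  obtain t where t: "t \<in> signs n" "\<bar>Q3 n Tt r s w\<bar> \<le> \<bar>Q3 n Tt r s t\<bar>"
    using lin_sign[OF assms(3), of "\<lambda>k. \<Sum>i<n. \<Sum>j<n. Tt i j k * r i * s j"]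
    by (metis Q3_w)
  show ?thesis using r s t Sg_upper[OF r(1) s(1) t(1), of Tt] by linarith
qed

definition sepb :: "(real \<times> real \<Rightarrow> real) \<Rightarrow> real \<Rightarrow> bool" where
  "sepb F K \<longleftrightarrow> (\<forall>n (c::nat\<Rightarrow>nat\<Rightarrow>real) (x::nat\<Rightarrow>real) (y::nat\<Rightarrow>real) B.
     (\<forall>u v. (\<forall>i<n. \<bar>u i\<bar> \<le> 1) \<longrightarrow> (\<forall>j<n. \<bar>v j\<bar> \<le> 1) \<longrightarrow>
        \<bar>\<Sum>i<n. \<Sum>j<n. c i j * u i * v j\<bar> \<le> B) \<longrightarrow>
     \<bar>\<Sum>i<n. \<Sum>j<n. c i j * F (x i, y j)\<bar> \<le> K * B)"

lemma sepbD:
  fixes n :: nat and c :: "nat \<Rightarrow> nat \<Rightarrow> real" and x y :: "nat \<Rightarrow> real"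
  assumes "sepb F K"
    and "\<And>u v. (\<forall>i<n. \<bar>u i\<bar> \<le> 1) \<Longrightarrow> (\<forall>j<n. \<bar>v j\<bar> \<le> 1) \<Longrightarrow>
        \<bar>\<Sum>i<n. \<Sum>j<n. c i j * u i * v j\<bar> \<le> B"
  shows "\<bar>\<Sum>i<n. \<Sum>j<n. c i j * F (x i, y j)\<bar> \<le> K * B"
proof -
  have P: "\<forall>u v. (\<forall>i<n. \<bar>u i\<bar> \<le> 1) \<longrightarrow> (\<forall>j<n. \<bar>v j\<bar> \<le> 1) \<longrightarrow>
        \<bar>\<Sum>i<n. \<Sum>j<n. c i j * u i * v j\<bar> \<le> B" using assms(2) by simp
  note H = assms(1)[unfolded sepb_def, THEN spec[of _ n], THEN spec[of _ c], THEN spec[of _ x], THEN spec[of _ y], THEN spec[of _ B]]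
  show ?thesis by (rule mp[OF H]) fact
qed

lemma sepb_mono:
  assumes "sepb F K" "K \<le> K'" shows "sepb F K'"
  unfolding sepb_def
proof (intro allI impI)
  fix n :: nat and c :: "nat \<Rightarrow> nat \<Rightarrow> real" and x y :: "nat \<Rightarrow> real" and B :: real
  assume h: "\<forall>u v. (\<forall>i<n. \<bar>u i\<bar> \<le> (1::real)) \<longrightarrow> (\<forall>j<n. \<bar>v j\<bar> \<le> 1) \<longrightarrow>
        \<bar>\<Sum>i<n. \<Sum>j<n. c i j * u i * v j\<bar> \<le> B"
  have "B \<ge> 0" using h[rule_format, of "\<lambda>_. 0" "\<lambda>_. 0"] by simp
  have "\<bar>\<Sum>i<n. \<Sum>j<n. c i j * F (x i, y j)\<bar> \<le> K * B"
    using assms(1)[unfolded sepb_def, THEN spec[of _ n], THEN spec[of _ c], THEN spec[of _ x], THEN spec[of _ y], THEN spec[of _ B]] h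
    by (rule mp)
  also have "\<dots> \<le> K' * B" using \<open>B \<ge> 0\<close> assms(2) by (simp add: mult_right_mono)
  finally show "\<bar>\<Sum>i<n. \<Sum>j<n. c i j * F (x i, y j)\<bar> \<le> K' * B" .
qed

lemma term1_bound:
  assumes F: "sepb F K1" and G: "sepb G K2" and K1: "K1 \<ge> 0"
  shows "\<bar>\<Sum>i<n. \<Sum>j<n. \<Sum>k<n. Tt i j k * F (x i, x j) * G (x i, x k)\<bar>
          \<le> K1 * (K2 * (real n ^ 3 * Sg n Tt))"
proof -
  define c where "c i j = (\<Sum>k<n. Tt i j k * G (x i, x k))" for i j
  have eq: "(\<Sum>i<n. \<Sum>j<n. \<Sum>k<n. Tt i j k * F (x i, x j) * G (x i, x k))
      = (\<Sum>i<n. \<Sum>j<n. c i j * F (x i, x j))"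
    unfolding c_def unfolding sum_distrib_right by (intro sum.cong refl; simp add: mult_ac)
  have "\<bar>\<Sum>i<n. \<Sum>j<n. c i j * F (x i, x j)\<bar> \<le> K1 * (K2 * (real n ^ 3 * Sg n Tt))"
  proof (rule sepbD[OF F, where n=n and c=c and x=x and y=x])
    fix u v :: "nat \<Rightarrow> real"
    assume u: "\<forall>i<n. \<bar>u i\<bar> \<le> 1" and v: "\<forall>j<n. \<bar>v j\<bar> \<le> 1"
    define c' where "c' i k = (\<Sum>j<n. Tt i j k * u i * v j)" for i k
    have eq2: "(\<Sum>i<n. \<Sum>j<n. c i j * u i * v j) = (\<Sum>i<n. \<Sum>k<n. c' i k * G (x i, x k))"
    proof -
      have "(\<Sum>i<n. \<Sum>j<n. c i j * u i * v j) = (\<Sum>i<n. \<Sum>j<n. \<Sum>k<n. Tt i j k * u i * v j * G (x i, x k))"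
        unfolding c_def unfolding sum_distrib_right by (intro sum.cong refl; simp add: mult_ac)
      also have "\<dots> = (\<Sum>i<n. \<Sum>k<n. \<Sum>j<n. Tt i j k * u i * v j * G (x i, x k))"
        by (intro sum.cong refl sum.swap)
      moreover have "(\<Sum>i<n. \<Sum>k<n. c' i k * G (x i, x k)) = (\<Sum>i<n. \<Sum>k<n. \<Sum>j<n. Tt i j k * u i * v j * G (x i, x k))"
        unfolding c'_def unfolding sum_distrib_right by (intro sum.cong refl; simp add: mult_ac)
      ultimately show ?thesis by simp
    qed
    have "\<bar>\<Sum>i<n. \<Sum>k<n. c' i k * G (x i, x k)\<bar> \<le> K2 * (real n ^ 3 * Sg n Tt)"
    proof (rule sepbD[OF G, where n=n and c=c' and x=x and y=x])
      fix u' w :: "nat \<Rightarrow> real"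
      assume u': "\<forall>i<n. \<bar>u' i\<bar> \<le> 1" and w: "\<forall>j<n. \<bar>w j\<bar> \<le> 1"
      have "(\<Sum>i<n. \<Sum>k<n. c' i k * u' i * w k) = Q3 n Tt (\<lambda>i. u i * u' i) v w"
      proof -
        have "(\<Sum>i<n. \<Sum>k<n. c' i k * u' i * w k) = (\<Sum>i<n. \<Sum>k<n. \<Sum>j<n. Tt i j k * (u i * u' i) * v j * w k)"
          unfolding c'_def unfolding sum_distrib_right by (intro sum.cong refl; simp add: mult_ac)
        also have "\<dots> = Q3 n Tt (\<lambda>i. u i * u' i) v w"
          unfolding Q3_def by (intro sum.cong refl sum.swap)
        finally show ?thesis .
      qed
      moreover have "\<forall>i<n. \<bar>u i * u' i\<bar> \<le> 1"
        using u u' by (simp add: abs_mult mult_le_one)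
      ultimately show "\<bar>\<Sum>i<n. \<Sum>k<n. c' i k * u' i * w k\<bar> \<le> real n ^ 3 * Sg n Tt"
        using tri_bound[of n _ v w Tt] v w by simp
    qed
    then show "\<bar>\<Sum>i<n. \<Sum>j<n. c i j * u i * v j\<bar> \<le> K2 * (real n ^ 3 * Sg n Tt)"
      using eq2 by simp
  qed
  then show ?thesis using eq by simp
qed

lemma term2_bound:
  assumes F: "sepb F K1" and G: "sepb G K2" and K1: "K1 \<ge> 0"
  shows "\<bar>\<Sum>i<n. \<Sum>j<n. \<Sum>k<n. Tt i j k * F (x i, x j) * G (x j, x k)\<bar>
          \<le> K1 * (K2 * (real n ^ 3 * Sg n Tt))"
proof -
  define c where "c i j = (\<Sum>k<n. Tt i j k * G (x j, x k))" for i j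
  have eq: "(\<Sum>i<n. \<Sum>j<n. \<Sum>k<n. Tt i j k * F (x i, x j) * G (x j, x k))
      = (\<Sum>i<n. \<Sum>j<n. c i j * F (x i, x j))"
    unfolding c_def unfolding sum_distrib_right by (intro sum.cong refl; simp add: mult_ac)
  have "\<bar>\<Sum>i<n. \<Sum>j<n. c i j * F (x i, x j)\<bar> \<le> K1 * (K2 * (real n ^ 3 * Sg n Tt))"
  proof (rule sepbD[OF F, where n=n and c=c and x=x and y=x])
    fix u v :: "nat \<Rightarrow> real"
    assume u: "\<forall>i<n. \<bar>u i\<bar> \<le> 1" and v: "\<forall>j<n. \<bar>v j\<bar> \<le> 1"
    define c' where "c' j k = (\<Sum>i<n. Tt i j k * u i * v j)" for j k
    have eq2: "(\<Sum>i<n. \<Sum>j<n. c i j * u i * v j) = (\<Sum>j<n. \<Sum>k<n. c' j k * G (x j, x k))"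
    proof -
      have "(\<Sum>i<n. \<Sum>j<n. c i j * u i * v j) = (\<Sum>i<n. \<Sum>j<n. \<Sum>k<n. Tt i j k * u i * v j * G (x j, x k))"
        unfolding c_def unfolding sum_distrib_right by (intro sum.cong refl; simp add: mult_ac)
      also have "\<dots> = (\<Sum>j<n. \<Sum>i<n. \<Sum>k<n. Tt i j k * u i * v j * G (x j, x k))"
        by (rule sum.swap)
      also have "\<dots> = (\<Sum>j<n. \<Sum>k<n. \<Sum>i<n. Tt i j k * u i * v j * G (x j, x k))"
        by (intro sum.cong refl sum.swap)
      moreover have "(\<Sum>j<n. \<Sum>k<n. c' j k * G (x j, x k)) = (\<Sum>j<n. \<Sum>k<n. \<Sum>i<n. Tt i j k * u i * v j * G (x j, x k))"
        unfolding c'_def unfolding sum_distrib_right by (intro sum.cong refl; simp add: mult_ac)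
      ultimately show ?thesis by simp
    qed
    have "\<bar>\<Sum>j<n. \<Sum>k<n. c' j k * G (x j, x k)\<bar> \<le> K2 * (real n ^ 3 * Sg n Tt)"
    proof (rule sepbD[OF G, where n=n and c=c' and x=x and y=x])
      fix v' w :: "nat \<Rightarrow> real"
      assume v': "\<forall>i<n. \<bar>v' i\<bar> \<le> 1" and w: "\<forall>j<n. \<bar>w j\<bar> \<le> 1"
      have "(\<Sum>j<n. \<Sum>k<n. c' j k * v' j * w k) = Q3 n Tt u (\<lambda>j. v j * v' j) w"
      proof -
        have "(\<Sum>j<n. \<Sum>k<n. c' j k * v' j * w k) = (\<Sum>j<n. \<Sum>k<n. \<Sum>i<n. Tt i j k * u i * (v j * v' j) * w k)"
          unfolding c'_def unfolding sum_distrib_right by (intro sum.cong refl; simp add: mult_ac)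
        also have "\<dots> = (\<Sum>j<n. \<Sum>i<n. \<Sum>k<n. Tt i j k * u i * (v j * v' j) * w k)"
          by (intro sum.cong refl sum.swap)
        also have "\<dots> = Q3 n Tt u (\<lambda>j. v j * v' j) w"
          unfolding Q3_def by (rule sum.swap)
        finally show ?thesis .
      qed
      moreover have "\<forall>i<n. \<bar>v i * v' i\<bar> \<le> 1"
        using v v' by (simp add: abs_mult mult_le_one)
      ultimately show "\<bar>\<Sum>j<n. \<Sum>k<n. c' j k * v' j * w k\<bar> \<le> real n ^ 3 * Sg n Tt"
        using tri_bound[of n u _ w Tt] u w by simp
    qed
    then show "\<bar>\<Sum>i<n. \<Sum>j<n. c i j * u i * v j\<bar> \<le> K2 * (real n ^ 3 * Sg n Tt)"
      using eq2 by simp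
  qed
  then show ?thesis using eq by simp
qed

definition ind :: "real \<Rightarrow> real \<Rightarrow> real" where
  "ind b s = (if s \<le> b then 1 else 0)"

lemma ind_diff_abs: "\<bar>ind b s - ind a s\<bar> \<le> 1"
  unfolding ind_def by auto

lemma ftc_on:
  fixes f f' :: "real \<Rightarrow> real"
  assumes d: "\<And>s. (f has_real_derivative f' s) (at s)" and "a \<le> b"
  shows "(f' has_integral (f b - f a)) {a..b}"
proof (rule fundamental_theorem_of_calculus[OF \<open>a \<le> b\<close>])
  fix x assume "x \<in> {a..b}"
  show "(f has_vector_derivative f' x) (at x within {a..b})"
    using d[of x] by (simp add: has_real_derivative_iff_has_vector_derivative has_vector_derivative_at_within)
qed

lemma kfact1:
  fixes f f' :: "real \<Rightarrow> real"
  assumes d: "\<And>s. (f has_real_derivative f' s) (at s)"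
    and b: "b \<in> {0..2*pi}"
  shows "((\<lambda>s. f' s * ind b s) has_integral (f b - f 0)) {0..2*pi}"
proof -
  have eq: "(\<lambda>s. f' s * ind b s) = (\<lambda>s. if s \<in> {..b} then f' s else 0)"
    by (auto simp: ind_def)
  have i: "{..b} \<inter> {0..2*pi} = {0..b}" using b by auto
  show ?thesis unfolding eq has_integral_restrict_Int i
    using ftc_on[OF d, of 0 b] b by simp
qed

lemma kfact:
  fixes f f' :: "real \<Rightarrow> real"
  assumes d: "\<And>s. (f has_real_derivative f' s) (at s)"
    and a: "a \<in> {0..2*pi}" and b: "b \<in> {0..2*pi}"
  shows "(\<lambda>s. f' s * (ind b s - ind a s)) integrable_on {0..2*pi}"
    and "integral {0..2*pi} (\<lambda>s. f' s * (ind b s - ind a s)) = f b - f a"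
proof -
  have "((\<lambda>s. f' s * ind b s - f' s * ind a s) has_integral ((f b - f 0) - (f a - f 0))) {0..2*pi}"
    by (intro has_integral_diff kfact1[OF d] a b)
  then have h: "((\<lambda>s. f' s * (ind b s - ind a s)) has_integral (f b - f a)) {0..2*pi}"
    by (simp add: algebra_simps)
  show "(\<lambda>s. f' s * (ind b s - ind a s)) integrable_on {0..2*pi}" using h by blast
  show "integral {0..2*pi} (\<lambda>s. f' s * (ind b s - ind a s)) = f b - f a" using h by (rule integral_unique)
qed

definition red :: "real \<Rightarrow> real" where
  "red x = x - 2*pi * of_int \<lfloor>x / (2*pi)\<rfloor>"

lemma red_range: "red x \<in> {0..2*pi}"
proof -
  have p: "2*pi > 0" by simp
  have "of_int \<lfloor>x / (2*pi)\<rfloor> \<le> x / (2*pi)" by (rule of_int_floor_le)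
  then have "of_int \<lfloor>x / (2*pi)\<rfloor> * (2*pi) \<le> x" using pos_le_divide_eq[OF p] by blast
  then have "2*pi * of_int \<lfloor>x / (2*pi)\<rfloor> \<le> x" by (simp add: mult.commute)
  moreover have "x / (2*pi) < of_int \<lfloor>x / (2*pi)\<rfloor> + 1" by (rule real_of_int_floor_add_one_gt)
  then have "x < (of_int \<lfloor>x / (2*pi)\<rfloor> + 1) * (2*pi)" using pos_divide_less_eq[OF p] by blast
  then have "x < 2*pi * of_int \<lfloor>x / (2*pi)\<rfloor> + 2*pi" by (simp add: algebra_simps)
  ultimately show ?thesis unfolding red_def by auto
qed

lemma per_nat:
  fixes h :: "real \<Rightarrow> 'a"
  assumes "\<And>x. h (x + 2*pi) = h x"
  shows "h (x + 2*pi * real m) = h x"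
proof (induction m)
  case 0 then show ?case by simp
next
  case (Suc m)
  have "h (x + 2*pi * real (Suc m)) = h ((x + 2*pi * real m) + 2*pi)" by (simp add: algebra_simps)
  also have "\<dots> = h (x + 2*pi * real m)" by (rule assms)
  finally show ?case using Suc by simp
qed

lemma per_red:
  fixes h :: "real \<Rightarrow> 'a"
  assumes "\<And>x. h (x + 2*pi) = h x"
  shows "h (red x) = h x"
proof (cases "\<lfloor>x / (2*pi)\<rfloor> \<ge> 0")
  case True
  obtain m :: nat where m: "\<lfloor>x / (2*pi)\<rfloor> = int m"
    using True by (intro that[of "nat \<lfloor>x / (2*pi)\<rfloor>"]) simp
  have "h x = h (red x + 2*pi * real m)" unfolding red_def m by simp
  then show ?thesis using per_nat[where h=h, OF assms] by simp
next
  case False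
  obtain m :: nat where m: "\<lfloor>x / (2*pi)\<rfloor> = - int m"
  proof -
    have k: "\<And>k::int. \<not> k \<ge> 0 \<Longrightarrow> k = - int (nat (-k))" by simp
    show ?thesis by (rule that[of "nat (- \<lfloor>x / (2*pi)\<rfloor>)"], rule k[OF False])
  qed
  have "h (red x) = h (x + 2*pi * real m)" unfolding red_def m by simp
  then show ?thesis using per_nat[where h=h, OF assms] by simp
qed

lemma exists_le_mean:
  fixes f :: "real \<Rightarrow> real"
  assumes "f integrable_on {0..2*pi}"
  shows "\<exists>x\<in>{0..2*pi}. f x \<le> integral {0..2*pi} f / (2*pi) + 1"
proof (rule ccontr)
  assume "\<not> ?thesis"
  then have lt: "\<And>x. x \<in> {0..2*pi} \<Longrightarrow> integral {0..2*pi} f / (2*pi) + 1 \<le> f x" by force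
  have "integral {0..2*pi} (\<lambda>x. integral {0..2*pi} f / (2*pi) + 1) \<le> integral {0..2*pi} f"
    by (rule integral_le) (use lt assms in auto)
  then have "2*pi * (integral {0..2*pi} f / (2*pi) + 1) \<le> integral {0..2*pi} f" by simp
  then show False using pi_gt_zero by (simp add: algebra_simps)
qed

definition E2 :: "(real \<times> real \<Rightarrow> real) \<Rightarrow> real" where
  "E2 h = integral (cbox (0,0) (2*pi,2*pi)) (\<lambda>z. (h z)\<^sup>2)"

lemma iter_bound:
  fixes h :: "real \<times> real \<Rightarrow> real"
  assumes c: "continuous_on UNIV h"
  shows "(\<lambda>x. integral {0..2*pi} (\<lambda>y. \<bar>h (x,y)\<bar>)) integrable_on {0..2*pi}"
    and "integral {0..2*pi} (\<lambda>x. integral {0..2*pi} (\<lambda>y. \<bar>h (x,y)\<bar>)) \<le> (E2 h + (2*pi)^2) / 2"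
proof -
  have ca: "continuous_on (cbox (0,0) (2*pi,2*pi)) (\<lambda>z. \<bar>h z\<bar>)"
    by (intro continuous_intros continuous_on_subset[OF c]) auto
  have cq: "continuous_on (cbox (0,0) (2*pi,2*pi)) (\<lambda>z. ((h z)\<^sup>2 + 1) / 2)"
    by (intro continuous_intros continuous_on_subset[OF c]) auto
  have i1: "(\<lambda>x. integral (cbox 0 (2*pi)) (\<lambda>y. \<bar>h (x,y)\<bar>)) integrable_on cbox 0 (2*pi)"
    using integral_integrable_2dim[OF ca] by simp
  then show i1': "(\<lambda>x. integral {0..2*pi} (\<lambda>y. \<bar>h (x,y)\<bar>)) integrable_on {0..2*pi}"
    by (simp add: cbox_interval)
  have i2: "(\<lambda>x. integral (cbox 0 (2*pi)) (\<lambda>y. ((h (x,y))\<^sup>2 + 1) / 2)) integrable_on cbox 0 (2*pi)"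
    using integral_integrable_2dim[OF cq] by simp
  have pc: "integral (cbox (0,0) (2*pi,2*pi)) (\<lambda>z. ((h z)\<^sup>2 + 1) / 2)
      = integral (cbox 0 (2*pi)) (\<lambda>x. integral (cbox 0 (2*pi)) (\<lambda>y. ((h (x,y))\<^sup>2 + 1) / 2))"
    using integral_prod_continuous[OF cq] by simp
  have ihx: "\<And>x. (\<lambda>y. h (x,y)) integrable_on {0..2*pi}"
    by (rule integrable_continuous_interval) (intro continuous_intros continuous_on_compose2[OF c]; auto)
  have le: "integral {0..2*pi} (\<lambda>x. integral {0..2*pi} (\<lambda>y. \<bar>h (x,y)\<bar>))
      \<le> integral {0..2*pi} (\<lambda>x. integral {0..2*pi} (\<lambda>y. ((h (x,y))\<^sup>2 + 1) / 2))"
  proof (rule integral_le)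
    show "(\<lambda>x. integral {0..2*pi} (\<lambda>y. \<bar>h (x,y)\<bar>)) integrable_on {0..2*pi}" by (rule i1')
    show "(\<lambda>x. integral {0..2*pi} (\<lambda>y. ((h (x,y))\<^sup>2 + 1) / 2)) integrable_on {0..2*pi}"
      using i2 by (simp add: cbox_interval)
    fix x
    show "integral {0..2*pi} (\<lambda>y. \<bar>h (x,y)\<bar>) \<le> integral {0..2*pi} (\<lambda>y. ((h (x,y))\<^sup>2 + 1) / 2)"
    proof (rule integral_le)
      show "(\<lambda>y. \<bar>h (x,y)\<bar>) integrable_on {0..2*pi}"
        by (rule integrable_continuous_interval) (intro continuous_intros continuous_on_compose2[OF c]; auto)
      show "(\<lambda>y. ((h (x,y))\<^sup>2 + 1) / 2) integrable_on {0..2*pi}"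
        by (rule integrable_continuous_interval) (intro continuous_intros continuous_on_compose2[OF c]; auto)
      fix y
      have "0 \<le> (\<bar>h (x,y)\<bar> - 1)\<^sup>2" by simp
      then show "\<bar>h (x,y)\<bar> \<le> ((h (x,y))\<^sup>2 + 1) / 2" by (simp add: power2_eq_square algebra_simps abs_mult_self_eq)
    qed
  qed
  have ih2: "(\<lambda>z. (h z)\<^sup>2) integrable_on cbox (0,0) (2*pi,2*pi)"
    by (rule integrable_continuous) (intro continuous_intros continuous_on_subset[OF c]; auto)
  have "integral (cbox (0,0) (2*pi,2*pi)) (\<lambda>z. ((h z)\<^sup>2 + 1) / 2)
      = (integral (cbox (0,0) (2*pi,2*pi)) (\<lambda>z. (h z)\<^sup>2) + integral (cbox (0,0) (2*pi,2*pi)) (\<lambda>z. 1)) / 2"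
  proof -
    have "integral (cbox (0,0) (2*pi,2*pi)) (\<lambda>z. (h z)\<^sup>2 + 1) = integral (cbox (0,0) (2*pi,2*pi)) (\<lambda>z. (h z)\<^sup>2) + integral (cbox (0,0) (2*pi,2*pi)) (\<lambda>z. 1)"
      by (rule integral_add[OF ih2 integrable_const])
    then show ?thesis by simp
  qed
  also have "\<dots> = (E2 h + (2*pi)^2) / 2"
    unfolding E2_def by (simp add: content_Pair power2_eq_square)
  finally show "integral {0..2*pi} (\<lambda>x. integral {0..2*pi} (\<lambda>y. \<bar>h (x,y)\<bar>)) \<le> (E2 h + (2*pi)^2) / 2"
    using le pc by (simp add: cbox_interval)
qed

lemma E2_swap:
  assumes c: "continuous_on UNIV h"
  shows "E2 (\<lambda>(y,x). h (x,y)) = E2 h"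
proof -
  have "integral (cbox (0, 0) (2*pi, 2*pi)) (\<lambda>(x, y). (\<lambda>a b. (h (b, a))\<^sup>2) x y)
      = integral (cbox (0, 0) (2*pi, 2*pi)) (\<lambda>(x, y). (\<lambda>a b. (h (b, a))\<^sup>2) y x)"
  proof (rule integral_swap_2dim)
    have "continuous_on UNIV (\<lambda>z. (h (snd z, fst z))\<^sup>2)"
      by (intro continuous_intros continuous_on_compose2[OF c]) auto
    then show "continuous_on (cbox (0, 0) (2 * pi, 2 * pi)) (\<lambda>(x, y). (\<lambda>a b. (h (b, a))\<^sup>2) x y)"
      unfolding case_prod_unfold by (rule continuous_on_subset) simp
  qed
  then show ?thesis unfolding E2_def by (simp add: case_prod_unfold)
qed

lemma iter_bound2:
  fixes h :: "real \<times> real \<Rightarrow> real"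
  assumes c: "continuous_on UNIV h"
  shows "(\<lambda>y. integral {0..2*pi} (\<lambda>x. \<bar>h (x,y)\<bar>)) integrable_on {0..2*pi}"
    and "integral {0..2*pi} (\<lambda>y. integral {0..2*pi} (\<lambda>x. \<bar>h (x,y)\<bar>)) \<le> (E2 h + (2*pi)^2) / 2"
proof -
  have c': "continuous_on UNIV (\<lambda>(y,x). h (x,y))"
    unfolding case_prod_unfold by (intro continuous_on_compose2[OF c] continuous_intros) auto
  show "(\<lambda>y. integral {0..2*pi} (\<lambda>x. \<bar>h (x,y)\<bar>)) integrable_on {0..2*pi}"
    using iter_bound(1)[OF c'] by simp
  show "integral {0..2*pi} (\<lambda>y. integral {0..2*pi} (\<lambda>x. \<bar>h (x,y)\<bar>)) \<le> (E2 h + (2*pi)^2) / 2"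
    using iter_bound(2)[OF c'] E2_swap[OF c] by simp
qed

lemma sumint:
  fixes f :: "nat \<Rightarrow> nat \<Rightarrow> real \<Rightarrow> real"
  assumes "\<And>i j. i < n \<Longrightarrow> j < n \<Longrightarrow> f i j integrable_on S"
  shows "(\<lambda>s. \<Sum>i<n. \<Sum>j<n. c i j * f i j s) integrable_on S"
    and "(\<Sum>i<n. \<Sum>j<n. c i j * integral S (f i j)) = integral S (\<lambda>s. \<Sum>i<n. \<Sum>j<n. c i j * f i j s)"
proof -
  have ij: "\<And>i j. i < n \<Longrightarrow> j < n \<Longrightarrow> (\<lambda>s. c i j * f i j s) integrable_on S"
    by (rule integrable_on_mult_right, rule assms) auto
  have i: "\<And>i. i < n \<Longrightarrow> (\<lambda>s. \<Sum>j<n. c i j * f i j s) integrable_on S"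
    by (rule integrable_sum) (auto intro: ij)
  show "(\<lambda>s. \<Sum>i<n. \<Sum>j<n. c i j * f i j s) integrable_on S"
    by (rule integrable_sum) (auto intro: i)
  have "integral S (\<lambda>s. \<Sum>i<n. \<Sum>j<n. c i j * f i j s) = (\<Sum>i<n. integral S (\<lambda>s. \<Sum>j<n. c i j * f i j s))"
    by (rule integral_sum) (auto intro: i)
  also have "\<dots> = (\<Sum>i<n. \<Sum>j<n. integral S (\<lambda>s. c i j * f i j s))"
    by (intro sum.cong refl integral_sum) (auto intro: ij)
  also have "\<dots> = (\<Sum>i<n. \<Sum>j<n. c i j * integral S (f i j))"
    by simp
  finally show "(\<Sum>i<n. \<Sum>j<n. c i j * integral S (f i j)) = integral S (\<lambda>s. \<Sum>i<n. \<Sum>j<n. c i j * f i j s)" by simp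
qed

lemma bnd:
  fixes f w :: "real \<Rightarrow> real"
  assumes "f integrable_on S" "w integrable_on S" "\<And>s. s \<in> S \<Longrightarrow> \<bar>f s\<bar> \<le> w s * B"
  shows "\<bar>integral S f\<bar> \<le> B * integral S w"
proof -
  have "norm (integral S f) \<le> integral S (\<lambda>s. w s * B)"
    by (rule integral_norm_bound_integral) (use assms in \<open>auto intro: integrable_on_mult_left\<close>)
  then show ?thesis by (simp add: mult.commute)
qed

lemma div_le_self_real: "0 \<le> (a::real) \<Longrightarrow> 1 \<le> P \<Longrightarrow> a / P \<le> a"
proof -
  assume a: "0 \<le> a" and P: "1 \<le> P"
  have "a * 1 \<le> a * P" by (rule mult_left_mono) (use P a in auto)
  then show ?thesis using P by (simp add: divide_le_eq)
qed

lemma rep: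
  fixes F F1 F2 F12 :: "real \<times> real \<Rightarrow> real"
  assumes cF: "continuous_on UNIV F" and cF1: "continuous_on UNIV F1"
    and cF2: "continuous_on UNIV F2" and cF12: "continuous_on UNIV F12"
    and perx: "\<And>x y. F (x + 2*pi, y) = F (x, y)" and pery: "\<And>x y. F (x, y + 2*pi) = F (x, y)"
    and dF1: "\<And>x y. ((\<lambda>s. F (s, y)) has_real_derivative F1 (x, y)) (at x)"
    and dF2: "\<And>x y. ((\<lambda>u. F (x, u)) has_real_derivative F2 (x, y)) (at y)"
    and dF12: "\<And>x y. ((\<lambda>s. F2 (s, y)) has_real_derivative F12 (x, y)) (at x)"
  shows "sepb F ((E2 F + E2 F1 + E2 F2 + E2 F12) / 2 + 200)"
  unfolding sepb_def
proof (intro allI impI)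
  fix n :: nat and c :: "nat \<Rightarrow> nat \<Rightarrow> real" and x y :: "nat \<Rightarrow> real" and B :: real
  assume H0: "\<forall>u v. (\<forall>i<n. \<bar>u i\<bar> \<le> (1::real)) \<longrightarrow> (\<forall>j<n. \<bar>v j\<bar> \<le> 1) \<longrightarrow>
        \<bar>\<Sum>i<n. \<Sum>j<n. c i j * u i * v j\<bar> \<le> B"
  have H: "\<bar>\<Sum>i<n. \<Sum>j<n. c i j * u i * v j\<bar> \<le> B"
    if "\<And>i. \<bar>u i\<bar> \<le> 1" "\<And>j. \<bar>v j\<bar> \<le> 1" for u v :: "nat \<Rightarrow> real"
    using H0 that by simp
  have Bnn: "B \<ge> 0" using H[of "\<lambda>_. 0" "\<lambda>_. 0"] by simp
  have contx: "continuous_on UNIV (\<lambda>s. G (s, b))" if "continuous_on UNIV G" for G :: "real \<times> real \<Rightarrow> real" and b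
    by (intro continuous_on_compose2[OF that] continuous_intros) auto
  have conty: "continuous_on UNIV (\<lambda>s. G (b, s))" if "continuous_on UNIV G" for G :: "real \<times> real \<Rightarrow> real" and b
    by (intro continuous_on_compose2[OF that] continuous_intros) auto
  have intabs: "(\<lambda>s. \<bar>g s\<bar>) integrable_on {0..2*pi}" if "continuous_on UNIV g" for g :: "real \<Rightarrow> real"
    by (rule integrable_continuous_interval) (intro continuous_intros continuous_on_subset[OF that]; simp)
  define JF where "JF x0 = integral {0..2*pi} (\<lambda>u. \<bar>F (x0,u)\<bar>)" for x0
  define JF2 where "JF2 x0 = integral {0..2*pi} (\<lambda>u. \<bar>F2 (x0,u)\<bar>)" for x0
  define JF1 where "JF1 y0 = integral {0..2*pi} (\<lambda>s. \<bar>F1 (s,y0)\<bar>)" for y0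
  define A where "A u = integral {0..2*pi} (\<lambda>s. \<bar>F12 (s,u)\<bar>)" for u
  have iF: "JF integrable_on {0..2*pi}" "integral {0..2*pi} JF \<le> (E2 F + (2*pi)^2) / 2"
    using iter_bound[OF cF] unfolding JF_def by auto
  have iF2: "JF2 integrable_on {0..2*pi}" "integral {0..2*pi} JF2 \<le> (E2 F2 + (2*pi)^2) / 2"
    using iter_bound[OF cF2] unfolding JF2_def by auto
  have iF1: "JF1 integrable_on {0..2*pi}" "integral {0..2*pi} JF1 \<le> (E2 F1 + (2*pi)^2) / 2"
    using iter_bound2[OF cF1] unfolding JF1_def by auto
  have iF12: "A integrable_on {0..2*pi}" "integral {0..2*pi} A \<le> (E2 F12 + (2*pi)^2) / 2"
    using iter_bound2[OF cF12] unfolding A_def by auto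
  have nnJF: "JF a \<ge> 0" for a unfolding JF_def by (rule integral_nonneg) (auto intro: intabs conty[OF cF])
  have nnJF1: "JF1 a \<ge> 0" for a unfolding JF1_def by (rule integral_nonneg) (auto intro: intabs contx[OF cF1])
  have nnJF2: "JF2 a \<ge> 0" for a unfolding JF2_def by (rule integral_nonneg) (auto intro: intabs conty[OF cF2])
  have nnA: "A a \<ge> 0" for a unfolding A_def by (rule integral_nonneg) (auto intro: intabs contx[OF cF12])
  have nnI: "integral {0..2*pi} JF \<ge> 0" "integral {0..2*pi} JF1 \<ge> 0" "integral {0..2*pi} JF2 \<ge> 0"
    "integral {0..2*pi} A \<ge> 0"
    by (auto intro!: integral_nonneg iF(1) iF1(1) iF2(1) iF12(1) nnJF nnJF1 nnJF2 nnA)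
  obtain x0 where x0: "x0 \<in> {0..2*pi}"
    and x0le: "JF2 x0 + JF x0 \<le> integral {0..2*pi} (\<lambda>x. JF2 x + JF x) / (2*pi) + 1"
    using exists_le_mean[OF integrable_add[OF iF2(1) iF(1)]] by blast
  have x0le': "JF2 x0 + JF x0 \<le> (integral {0..2*pi} JF2 + integral {0..2*pi} JF) / (2*pi) + 1"
    using x0le integral_add[OF iF2(1) iF(1)] by simp
  have iFx0: "(\<lambda>u. \<bar>F (x0,u)\<bar>) integrable_on {0..2*pi}" by (rule intabs[OF conty[OF cF]])
  obtain y0 where y0: "y0 \<in> {0..2*pi}"
    and y0le: "JF1 y0 + \<bar>F (x0,y0)\<bar> \<le> integral {0..2*pi} (\<lambda>y. JF1 y + \<bar>F (x0,y)\<bar>) / (2*pi) + 1"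
    using exists_le_mean[OF integrable_add[OF iF1(1) iFx0]] by blast
  have y0le': "JF1 y0 + \<bar>F (x0,y0)\<bar> \<le> (integral {0..2*pi} JF1 + JF x0) / (2*pi) + 1"
    using y0le integral_add[OF iF1(1) iFx0] unfolding JF_def by simp
  have Kb: "\<bar>F (x0,y0)\<bar> + JF1 y0 + JF2 x0 + integral {0..2*pi} A
      \<le> (E2 F + E2 F1 + E2 F2 + E2 F12) / 2 + 200"
  proof -
    have P1: "1 \<le> 2*pi" using pi_gt3 by simp
    have pi4: "pi < 4" by (rule pi_less_4)
    have sq: "(2*pi)^2 \<le> 64"
    proof -
      have "(2*pi)^2 \<le> 8^2" by (rule power_mono) (use pi4 pi_gt_zero in auto)
      then show ?thesis by simp
    qed
    have a1: "(integral {0..2*pi} JF1 + JF x0) / (2*pi) \<le> integral {0..2*pi} JF1 + JF x0"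
      by (rule div_le_self_real) (use nnI nnJF P1 in auto)
    have a2: "(integral {0..2*pi} JF2 + integral {0..2*pi} JF) / (2*pi) \<le> integral {0..2*pi} JF2 + integral {0..2*pi} JF"
      by (rule div_le_self_real) (use nnI P1 in auto)
    have s1: "\<bar>F (x0,y0)\<bar> + JF1 y0 \<le> integral {0..2*pi} JF1 + JF x0 + 1" using y0le' a1 by linarith
    have s2: "JF2 x0 + JF x0 \<le> integral {0..2*pi} JF2 + integral {0..2*pi} JF + 1" using x0le' a2 by linarith
    have s3: "\<bar>F (x0,y0)\<bar> + JF1 y0 + JF2 x0 + integral {0..2*pi} A \<le>
        integral {0..2*pi} JF1 + integral {0..2*pi} JF2 + integral {0..2*pi} JF + integral {0..2*pi} A + 2"
      using s1 s2 by linarith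
    define Q where "Q = (2*pi)^2"
    have "integral {0..2*pi} JF1 + integral {0..2*pi} JF2 + integral {0..2*pi} JF + integral {0..2*pi} A
       \<le> (E2 F + E2 F1 + E2 F2 + E2 F12) / 2 + 2 * Q"
          proof -
      have "integral {0..2*pi} JF1 + integral {0..2*pi} JF2 + integral {0..2*pi} JF + integral {0..2*pi} A
        \<le> (E2 F1 + (2*pi)^2) / 2 + (E2 F2 + (2*pi)^2) / 2 + (E2 F + (2*pi)^2) / 2 + (E2 F12 + (2*pi)^2) / 2"
        by (intro add_mono iF1(2) iF2(2) iF(2) iF12(2))
      then show ?thesis unfolding Q_def by (simp add: field_simps)
    qed
    moreover have "Q \<le> 64" using sq unfolding Q_def .
    ultimately show ?thesis using s3 by linarith
  qed
  define xr where "xr i = red (x i)" for i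
  define yr where "yr j = red (y j)" for j
  have xr: "xr i \<in> {0..2*pi}" for i unfolding xr_def by (rule red_range)
  have yr: "yr j \<in> {0..2*pi}" for j unfolding yr_def by (rule red_range)
  have Fred: "F (x i, y j) = F (xr i, yr j)" for i j
  proof -
    have "F (xr i, y j) = F (x i, y j)" unfolding xr_def
      by (rule per_red[where h="\<lambda>s. F (s, y j)"]) (rule perx)
    moreover have "F (xr i, yr j) = F (xr i, y j)" unfolding yr_def
      by (rule per_red[where h="\<lambda>s. F (xr i, s)"]) (rule pery)
    ultimately show ?thesis by simp
  qed
  define kx where "kx i s = ind (xr i) s - ind x0 s" for i s
  define ky where "ky j u = ind (yr j) u - ind y0 u" for j u
  have kxb: "\<bar>kx i s\<bar> \<le> 1" for i s unfolding kx_def by (rule ind_diff_abs)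
  have kyb: "\<bar>ky j s\<bar> \<le> 1" for j s unfolding ky_def by (rule ind_diff_abs)
  define I1 where "I1 i = integral {0..2*pi} (\<lambda>s. F1 (s,y0) * kx i s)" for i
  define I2 where "I2 j = integral {0..2*pi} (\<lambda>u. F2 (x0,u) * ky j u)" for j
  define I3 where "I3 i j = integral {0..2*pi} (\<lambda>u. (F2 (xr i,u) - F2 (x0,u)) * ky j u)" for i j
  have k1: "(\<lambda>s. F1 (s,y0) * kx i s) integrable_on {0..2*pi}" "I1 i = F (xr i, y0) - F (x0, y0)" for i
    unfolding kx_def I1_def
    by (rule kfact[where f="\<lambda>s. F (s,y0)" and f'="\<lambda>s. F1 (s,y0)"], rule dF1, rule x0, rule xr)+
  have k2: "(\<lambda>u. F2 (x0,u) * ky j u) integrable_on {0..2*pi}" "I2 j = F (x0, yr j) - F (x0, y0)" for j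
    unfolding ky_def I2_def
    by (rule kfact[where f="\<lambda>u. F (x0,u)" and f'="\<lambda>u. F2 (x0,u)"], rule dF2, rule y0, rule yr)+
  have d3: "((\<lambda>u. F (xr i,u) - F (x0,u)) has_real_derivative (F2 (xr i,s) - F2 (x0,s))) (at s)" for i s
    by (intro DERIV_diff dF2)
  have k3: "(\<lambda>u. (F2 (xr i,u) - F2 (x0,u)) * ky j u) integrable_on {0..2*pi}"
     "I3 i j = (F (xr i, yr j) - F (x0, yr j)) - (F (xr i, y0) - F (x0, y0))" for i j
    unfolding ky_def I3_def
    by (rule kfact[where f="\<lambda>u. F (xr i,u) - F (x0,u)" and f'="\<lambda>u. F2 (xr i,u) - F2 (x0,u)"], rule d3, rule y0, rule yr)+
  have k4: "(\<lambda>s. F12 (s,u) * kx i s) integrable_on {0..2*pi}"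
     "integral {0..2*pi} (\<lambda>s. F12 (s,u) * kx i s) = F2 (xr i, u) - F2 (x0, u)" for i u
    unfolding kx_def
    by (rule kfact[where f="\<lambda>s. F2 (s,u)" and f'="\<lambda>s. F12 (s,u)"], rule dF12, rule x0, rule xr)+
  have decomp: "(\<Sum>i<n. \<Sum>j<n. c i j * F (x i, y j)) =
      (\<Sum>i<n. \<Sum>j<n. c i j * F (x0, y0)) + (\<Sum>i<n. \<Sum>j<n. c i j * I1 i)
      + (\<Sum>i<n. \<Sum>j<n. c i j * I2 j) + (\<Sum>i<n. \<Sum>j<n. c i j * I3 i j)"
  proof -
    have "(\<Sum>i<n. \<Sum>j<n. c i j * F (x i, y j)) =
        (\<Sum>i<n. \<Sum>j<n. c i j * F (x0, y0) + c i j * I1 i + c i j * I2 j + c i j * I3 i j)"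
      by (intro sum.cong refl) (simp add: Fred k1(2) k2(2) k3(2) algebra_simps)
    then show ?thesis by (simp add: sum.distrib)
  qed
  have T0: "\<bar>\<Sum>i<n. \<Sum>j<n. c i j * F (x0, y0)\<bar> \<le> \<bar>F (x0,y0)\<bar> * B"
  proof -
    have "(\<Sum>i<n. \<Sum>j<n. c i j * F (x0, y0)) = F (x0,y0) * (\<Sum>i<n. \<Sum>j<n. c i j * (\<lambda>_. 1) i * (\<lambda>_. 1) j)"
      by (simp add: sum_distrib_left mult_ac)
    then show ?thesis using H[of "\<lambda>_. 1" "\<lambda>_. 1"] by (simp add: abs_mult mult_left_mono)
  qed
  have T1: "\<bar>\<Sum>i<n. \<Sum>j<n. c i j * I1 i\<bar> \<le> B * JF1 y0"
  proof -
    have e: "(\<Sum>i<n. \<Sum>j<n. c i j * I1 i) = integral {0..2*pi} (\<lambda>s. \<Sum>i<n. \<Sum>j<n. c i j * (F1 (s,y0) * kx i s))"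
      unfolding I1_def by (rule sumint(2)[where f="\<lambda>i j s. F1 (s,y0) * kx i s"]) (rule k1(1))
    have "\<bar>integral {0..2*pi} (\<lambda>s. \<Sum>i<n. \<Sum>j<n. c i j * (F1 (s,y0) * kx i s))\<bar>
        \<le> B * integral {0..2*pi} (\<lambda>s. \<bar>F1 (s,y0)\<bar>)"
    proof (rule bnd)
      show "(\<lambda>s. \<Sum>i<n. \<Sum>j<n. c i j * (F1 (s,y0) * kx i s)) integrable_on {0..2*pi}"
        by (rule sumint(1)[where f="\<lambda>i j s. F1 (s,y0) * kx i s"]) (rule k1(1))
      show "(\<lambda>s. \<bar>F1 (s,y0)\<bar>) integrable_on {0..2*pi}" by (rule intabs[OF contx[OF cF1]])
      fix s
      have "(\<Sum>i<n. \<Sum>j<n. c i j * (F1 (s,y0) * kx i s)) = F1 (s,y0) * (\<Sum>i<n. \<Sum>j<n. c i j * (\<lambda>i. kx i s) i * (\<lambda>_. 1) j)"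
        by (simp add: sum_distrib_left mult_ac)
      then show "\<bar>\<Sum>i<n. \<Sum>j<n. c i j * (F1 (s,y0) * kx i s)\<bar> \<le> \<bar>F1 (s,y0)\<bar> * B"
        using H[of "\<lambda>i. kx i s" "\<lambda>_. 1"] kxb by (simp add: abs_mult mult_left_mono)
    qed
    then show ?thesis using e unfolding JF1_def by simp
  qed
  have T2: "\<bar>\<Sum>i<n. \<Sum>j<n. c i j * I2 j\<bar> \<le> B * JF2 x0"
  proof -
    have e: "(\<Sum>i<n. \<Sum>j<n. c i j * I2 j) = integral {0..2*pi} (\<lambda>s. \<Sum>i<n. \<Sum>j<n. c i j * (F2 (x0,s) * ky j s))"
      unfolding I2_def by (rule sumint(2)[where f="\<lambda>i j s. F2 (x0,s) * ky j s"]) (rule k2(1))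
    have "\<bar>integral {0..2*pi} (\<lambda>s. \<Sum>i<n. \<Sum>j<n. c i j * (F2 (x0,s) * ky j s))\<bar>
        \<le> B * integral {0..2*pi} (\<lambda>s. \<bar>F2 (x0,s)\<bar>)"
    proof (rule bnd)
      show "(\<lambda>s. \<Sum>i<n. \<Sum>j<n. c i j * (F2 (x0,s) * ky j s)) integrable_on {0..2*pi}"
        by (rule sumint(1)[where f="\<lambda>i j s. F2 (x0,s) * ky j s"]) (rule k2(1))
      show "(\<lambda>s. \<bar>F2 (x0,s)\<bar>) integrable_on {0..2*pi}" by (rule intabs[OF conty[OF cF2]])
      fix s
      have "(\<Sum>i<n. \<Sum>j<n. c i j * (F2 (x0,s) * ky j s)) = F2 (x0,s) * (\<Sum>i<n. \<Sum>j<n. c i j * (\<lambda>_. 1) i * (\<lambda>j. ky j s) j)"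
        by (simp add: sum_distrib_left mult_ac)
      then show "\<bar>\<Sum>i<n. \<Sum>j<n. c i j * (F2 (x0,s) * ky j s)\<bar> \<le> \<bar>F2 (x0,s)\<bar> * B"
        using H[of "\<lambda>_. 1" "\<lambda>j. ky j s"] kyb by (simp add: abs_mult mult_left_mono)
    qed
    then show ?thesis using e unfolding JF2_def by simp
  qed
  have T3: "\<bar>\<Sum>i<n. \<Sum>j<n. c i j * I3 i j\<bar> \<le> B * integral {0..2*pi} A"
  proof -
    have e: "(\<Sum>i<n. \<Sum>j<n. c i j * I3 i j) = integral {0..2*pi} (\<lambda>u. \<Sum>i<n. \<Sum>j<n. c i j * ((F2 (xr i,u) - F2 (x0,u)) * ky j u))"
      unfolding I3_def by (rule sumint(2)[where f="\<lambda>i j u. (F2 (xr i,u) - F2 (x0,u)) * ky j u"]) (rule k3(1))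
    have "\<bar>integral {0..2*pi} (\<lambda>u. \<Sum>i<n. \<Sum>j<n. c i j * ((F2 (xr i,u) - F2 (x0,u)) * ky j u))\<bar>
        \<le> B * integral {0..2*pi} A"
    proof (rule bnd)
      show "(\<lambda>u. \<Sum>i<n. \<Sum>j<n. c i j * ((F2 (xr i,u) - F2 (x0,u)) * ky j u)) integrable_on {0..2*pi}"
        by (rule sumint(1)[where f="\<lambda>i j u. (F2 (xr i,u) - F2 (x0,u)) * ky j u"]) (rule k3(1))
      show "A integrable_on {0..2*pi}" by (rule iF12(1))
      fix u
      have e2: "(\<Sum>i<n. \<Sum>j<n. c i j * ((F2 (xr i,u) - F2 (x0,u)) * ky j u))
          = (\<Sum>i<n. \<Sum>j<n. (c i j * ky j u) * integral {0..2*pi} (\<lambda>s. F12 (s,u) * kx i s))"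
        by (intro sum.cong refl) (subst k4(2), simp add: mult_ac)
      also have "\<dots> = integral {0..2*pi} (\<lambda>s. \<Sum>i<n. \<Sum>j<n. (c i j * ky j u) * (F12 (s,u) * kx i s))"
        by (rule sumint(2)[where f="\<lambda>i j s. F12 (s,u) * kx i s"]) (rule k4(1))
      finally have e3: "(\<Sum>i<n. \<Sum>j<n. c i j * ((F2 (xr i,u) - F2 (x0,u)) * ky j u))
          = integral {0..2*pi} (\<lambda>s. \<Sum>i<n. \<Sum>j<n. (c i j * ky j u) * (F12 (s,u) * kx i s))" .
      have "\<bar>integral {0..2*pi} (\<lambda>s. \<Sum>i<n. \<Sum>j<n. (c i j * ky j u) * (F12 (s,u) * kx i s))\<bar>
          \<le> B * integral {0..2*pi} (\<lambda>s. \<bar>F12 (s,u)\<bar>)"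
      proof (rule bnd)
        show "(\<lambda>s. \<Sum>i<n. \<Sum>j<n. (c i j * ky j u) * (F12 (s,u) * kx i s)) integrable_on {0..2*pi}"
          by (rule sumint(1)[where f="\<lambda>i j s. F12 (s,u) * kx i s"]) (rule k4(1))
        show "(\<lambda>s. \<bar>F12 (s,u)\<bar>) integrable_on {0..2*pi}" by (rule intabs[OF contx[OF cF12]])
        fix s
        have "(\<Sum>i<n. \<Sum>j<n. (c i j * ky j u) * (F12 (s,u) * kx i s)) = F12 (s,u) * (\<Sum>i<n. \<Sum>j<n. c i j * (\<lambda>i. kx i s) i * (\<lambda>j. ky j u) j)"
          by (simp add: sum_distrib_left mult_ac)
        then show "\<bar>\<Sum>i<n. \<Sum>j<n. (c i j * ky j u) * (F12 (s,u) * kx i s)\<bar> \<le> \<bar>F12 (s,u)\<bar> * B"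
          using H[of "\<lambda>i. kx i s" "\<lambda>j. ky j u"] kxb kyb by (simp add: abs_mult mult_left_mono)
      qed
      then show "\<bar>\<Sum>i<n. \<Sum>j<n. c i j * ((F2 (xr i,u) - F2 (x0,u)) * ky j u)\<bar> \<le> A u * B"
        using e3 unfolding A_def by (simp add: mult.commute)
    qed
    then show ?thesis using e by simp
  qed
  have "\<bar>\<Sum>i<n. \<Sum>j<n. c i j * F (x i, y j)\<bar> \<le> \<bar>F (x0,y0)\<bar> * B + B * JF1 y0 + B * JF2 x0 + B * integral {0..2*pi} A"
    unfolding decomp using T0 T1 T2 T3 by linarith
  also have "\<dots> = B * (\<bar>F (x0,y0)\<bar> + JF1 y0 + JF2 x0 + integral {0..2*pi} A)" by (simp add: algebra_simps)
  also have "\<dots> \<le> B * ((E2 F + E2 F1 + E2 F2 + E2 F12) / 2 + 200)"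
    by (rule mult_left_mono[OF Kb Bnn])
  finally show "\<bar>\<Sum>i<n. \<Sum>j<n. c i j * F (x i, y j)\<bar> \<le> ((E2 F + E2 F1 + E2 F2 + E2 F12) / 2 + 200) * B"
    by (simp add: mult.commute)
qed

definition per2 :: "(real \<times> real \<Rightarrow> real) \<Rightarrow> bool" where
  "per2 h \<longleftrightarrow> (\<forall>x y. h (x + 2*pi, y) = h (x, y) \<and> h (x, y + 2*pi) = h (x, y))"

lemma deriv_shift_per:
  fixes f :: "real \<Rightarrow> real"
  assumes "\<And>u. f (u + c) = f u"
  shows "deriv f (x + c) = deriv f x"
proof -
  have "deriv f (x + c) = (SOME D. DERIV (\<lambda>u. f (u + c)) x :> D)"
    unfolding deriv_def DERIV_shift ..
  also have "(\<lambda>u. f (u + c)) = f" using assms by auto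
  finally show ?thesis unfolding deriv_def .
qed

lemma per2_d1:
  assumes p: "per2 h" shows "per2 (d1 h)"
  unfolding per2_def
proof (intro allI conjI)
  fix x y
  have "deriv (\<lambda>u. h (u, y)) (x + 2*pi) = deriv (\<lambda>u. h (u, y)) x"
    by (rule deriv_shift_per) (use p in \<open>auto simp: per2_def\<close>)
  then show "d1 h (x + 2*pi, y) = d1 h (x, y)" by (simp add: d1_def)
  have "(\<lambda>u. h (u, y + 2*pi)) = (\<lambda>u. h (u, y))" using p by (auto simp: per2_def)
  then show "d1 h (x, y + 2*pi) = d1 h (x, y)" by (simp add: d1_def)
qed

lemma per2_d2:
  assumes p: "per2 h" shows "per2 (d2 h)"
  unfolding per2_def
proof (intro allI conjI)
  fix x y
  have "deriv (\<lambda>v. h (x, v)) (y + 2*pi) = deriv (\<lambda>v. h (x, v)) y"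
    by (rule deriv_shift_per) (use p in \<open>auto simp: per2_def\<close>)
  then show "d2 h (x, y + 2*pi) = d2 h (x, y)" by (simp add: d2_def)
  have "(\<lambda>v. h (x + 2*pi, v)) = (\<lambda>v. h (x, v))" using p by (auto simp: per2_def)
  then show "d2 h (x + 2*pi, y) = d2 h (x, y)" by (simp add: d2_def)
qed

lemma per2_pd: "periodic_T2 g \<Longrightarrow> per2 (pd ds g)"
proof (induction ds)
  case Nil then show ?case by (simp add: per2_def periodic_T2_def)
next
  case (Cons a ds) then show ?case by (cases a) (auto intro: per2_d1 per2_d2)
qed

lemma sm_cont: "smooth_T2 g \<Longrightarrow> continuous_on UNIV (pd ds g)"
  unfolding smooth_T2_def by blast

lemma sm_per: "smooth_T2 g \<Longrightarrow> per2 (pd ds g)"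
  unfolding smooth_T2_def by (intro per2_pd) blast

lemma sm_d1: "smooth_T2 g \<Longrightarrow> ((\<lambda>u. pd ds g (u, y)) has_real_derivative pd (True # ds) g (x, y)) (at x)"
proof -
  assume "smooth_T2 g"
  then have "(\<lambda>u. pd ds g (u, y)) differentiable (at x)" unfolding smooth_T2_def by blast
  then have "DERIV (\<lambda>u. pd ds g (u, y)) x :> deriv (\<lambda>u. pd ds g (u, y)) x"
    by (simp add: DERIV_deriv_iff_real_differentiable)
  then show ?thesis by (simp add: d1_def)
qed

lemma sm_d2: "smooth_T2 g \<Longrightarrow> ((\<lambda>v. pd ds g (x, v)) has_real_derivative pd (False # ds) g (x, y)) (at y)"
proof -
  assume "smooth_T2 g"
  then have "(\<lambda>v. pd ds g (x, v)) differentiable (at y)" unfolding smooth_T2_def by blast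
  then have "DERIV (\<lambda>v. pd ds g (x, v)) y :> deriv (\<lambda>v. pd ds g (x, v)) y"
    by (simp add: DERIV_deriv_iff_real_differentiable)
  then show ?thesis by (simp add: d2_def)
qed

lemma sym_step1:
  assumes g: "smooth_T2 g" and ab: "a \<le> b"
  shows "pd [False] g (b, y) - pd [False] g (a, y) = integral {a..b} (\<lambda>s. pd [False, True] g (s, y))"
proof -
  let ?D1 = "pd [True] g" and ?D21 = "pd [False, True] g"
  have c1: "continuous_on UNIV ?D1" by (rule sm_cont[OF g])
  have c21: "continuous_on UNIV ?D21" by (rule sm_cont[OF g])
  have phi: "integral {a..b} (\<lambda>s. ?D1 (s, v)) = g (b, v) - g (a, v)" for v
  proof (rule integral_unique, rule ftc_on[OF _ ab])
    fix s show "((\<lambda>s. g (s, v)) has_real_derivative ?D1 (s, v)) (at s)"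
      using sm_d1[OF g, of "[]"] by simp
  qed
  have "((\<lambda>v. integral (cbox a b) (\<lambda>s. ?D1 (s, v))) has_field_derivative integral (cbox a b) (\<lambda>s. ?D21 (s, y))) (at y within UNIV)"
  proof (rule leibniz_rule_field_derivative[where f="\<lambda>v s. ?D1 (s, v)" and fx="\<lambda>v s. ?D21 (s, v)"])
    fix v t
    show "((\<lambda>v. ?D1 (t, v)) has_field_derivative ?D21 (t, v)) (at v within UNIV)"
      using sm_d2[OF g, of "[True]"] by simp
  next
    fix v show "(\<lambda>s. ?D1 (s, v)) integrable_on cbox a b"
      by (rule integrable_continuous) (intro continuous_on_compose2[OF c1] continuous_intros; auto)
  next
    show "continuous_on (UNIV \<times> cbox a b) (\<lambda>(v, s). ?D21 (s, v))"
      unfolding case_prod_unfold by (intro continuous_on_compose2[OF c21] continuous_intros; auto)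
  qed auto
  then have d1: "((\<lambda>v. g (b, v) - g (a, v)) has_field_derivative integral {a..b} (\<lambda>s. ?D21 (s, y))) (at y)"
    using phi by (simp add: cbox_interval)
  have d2: "((\<lambda>v. g (b, v) - g (a, v)) has_field_derivative pd [False] g (b, y) - pd [False] g (a, y)) (at y)"
    using sm_d2[OF g, of "[]"] by (intro DERIV_diff) auto
  show ?thesis using DERIV_unique[OF d2 d1] .
qed

lemma sym:
  assumes g: "smooth_T2 g"
  shows "pd [False, True] g (x, y) = pd [True, False] g (x, y)"
proof -
  let ?D2 = "pd [False] g" and ?D21 = "pd [False, True] g"
  have c21: "continuous_on UNIV ?D21" by (rule sm_cont[OF g])
  define a where "a = x - 1"
  define b where "b = x + 1"
  have x: "x \<in> {a..b}" "x \<in> {a<..<b}" unfolding a_def b_def by auto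
  have "((\<lambda>t. integral {a..t} (\<lambda>s. ?D21 (s, y))) has_real_derivative ?D21 (x, y)) (at x within {a..b})"
    by (rule integral_has_real_derivative[OF _ x(1)]) (intro continuous_on_compose2[OF c21] continuous_intros; auto)
  then have "((\<lambda>t. integral {a..t} (\<lambda>s. ?D21 (s, y))) has_real_derivative ?D21 (x, y)) (at x)"
    using at_within_interior[of x "{a..b}"] x by simp
  then have "((\<lambda>t. ?D2 (a, y) + integral {a..t} (\<lambda>s. ?D21 (s, y))) has_real_derivative ?D21 (x, y)) (at x)"
    by (intro DERIV_add[where D=0, simplified] DERIV_const)
  then have dA: "((\<lambda>t. ?D2 (t, y)) has_real_derivative ?D21 (x, y)) (at x)"
  proof (rule has_field_derivative_transform_within_open)
    show "open {a<..<b}" by simp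
    show "x \<in> {a<..<b}" by (rule x)
    fix t assume "t \<in> {a<..<b}"
    then have "a \<le> t" by simp
    then show "?D2 (a, y) + integral {a..t} (\<lambda>s. ?D21 (s, y)) = ?D2 (t, y)"
      using sym_step1[OF g, of a t y] by simp
  qed
  have dB: "((\<lambda>t. ?D2 (t, y)) has_real_derivative pd [True, False] g (x, y)) (at x)"
    using sm_d1[OF g, of "[False]"] by simp
  show ?thesis using DERIV_unique[OF dA dB] .
qed

lemma E2_nonneg: "E2 h \<ge> 0"
proof (cases "(\<lambda>z. (h z)\<^sup>2) integrable_on cbox (0,0) (2*pi,2*pi)")
  case True then show ?thesis unfolding E2_def by (rule integral_nonneg) simp
next
  case False then show ?thesis unfolding E2_def by (simp add: not_integrable_integral)
qed

lemma E2_le_H3: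
  assumes h: "H3_norm g \<le> 1" and ab: "a \<le> 3" "b \<le> 3 - a"
  shows "E2 (pdiff a b g) \<le> 1"
proof -
  let ?S = "\<Sum>a\<le>3. \<Sum>b\<le>3 - a. E2 (pdiff a b g)"
  have H: "H3_norm g = sqrt ?S" unfolding H3_norm_def E2_def ..
  have Snn: "?S \<ge> 0" by (intro sum_nonneg E2_nonneg)
  have S1: "?S \<le> 1" using h unfolding H by simp
  have "E2 (pdiff a b g) \<le> (\<Sum>b'\<le>3 - a. E2 (pdiff a b' g))"
    by (rule member_le_sum[where f="\<lambda>b'. E2 (pdiff a b' g)"]) (use ab in \<open>auto intro: E2_nonneg\<close>)
  also have "\<dots> \<le> ?S"
    by (rule member_le_sum[where f="\<lambda>a'. \<Sum>b'\<le>3 - a'. E2 (pdiff a' b' g)"]) (use ab in \<open>auto intro: sum_nonneg E2_nonneg\<close>)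
  finally show ?thesis using S1 by simp
qed

lemma sepb_Gamma:
  assumes g: "smooth_T2 \<Gamma>"
  shows "sepb \<Gamma> ((E2 \<Gamma> + E2 (pd [True] \<Gamma>) + E2 (pd [False] \<Gamma>) + E2 (pd [True, False] \<Gamma>)) / 2 + 200)"
proof -
  have p: "per2 (pd [] \<Gamma>)" by (rule sm_per[OF g])
  show ?thesis
  proof (rule rep)
    show "continuous_on UNIV \<Gamma>" using sm_cont[OF g, of "[]"] by simp
    show "continuous_on UNIV (pd [True] \<Gamma>)" by (rule sm_cont[OF g])
    show "continuous_on UNIV (pd [False] \<Gamma>)" by (rule sm_cont[OF g])
    show "continuous_on UNIV (pd [True, False] \<Gamma>)" by (rule sm_cont[OF g])
    show "\<Gamma> (x + 2 * pi, y) = \<Gamma> (x, y)" for x y using p by (simp add: per2_def)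
    show "\<Gamma> (x, y + 2 * pi) = \<Gamma> (x, y)" for x y using p by (simp add: per2_def)
    show "((\<lambda>s. \<Gamma> (s, y)) has_real_derivative pd [True] \<Gamma> (x, y)) (at x)" for x y
      using sm_d1[OF g, of "[]"] by simp
    show "((\<lambda>u. \<Gamma> (x, u)) has_real_derivative pd [False] \<Gamma> (x, y)) (at y)" for x y
      using sm_d2[OF g, of "[]"] by simp
    show "((\<lambda>s. pd [False] \<Gamma> (s, y)) has_real_derivative pd [True, False] \<Gamma> (x, y)) (at x)" for x y
      using sm_d1[OF g, of "[False]"] by simp
  qed
qed

lemma pdiff_simps:
  "pdiff 1 0 g = pd [True] g" "pdiff 0 1 g = pd [False] g" "pdiff 2 0 g = pd [True, True] g"
  "pdiff 1 1 g = pd [True, False] g" "pdiff 0 2 g = pd [False, False] g"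
  "pdiff 2 1 g = pd [True, True, False] g" "pdiff 1 2 g = pd [True, False, False] g"
  by (simp_all add: pdiff_def numeral_2_eq_2)

lemma sepb_d1:
  assumes g: "smooth_T2 g" and h: "H3_norm g \<le> 1"
  shows "sepb (pdiff 1 0 g) 202"
proof -
  have p: "per2 (pd [True] g)" by (rule sm_per[OF g])
  have "sepb (pd [True] g) ((E2 (pd [True] g) + E2 (pd [True, True] g) + E2 (pd [True, False] g) + E2 (pd [True, True, False] g)) / 2 + 200)"
  proof (rule rep)
    show "continuous_on UNIV (pd [True] g)" by (rule sm_cont[OF g])
    show "continuous_on UNIV (pd [True, True] g)" by (rule sm_cont[OF g])
    show "continuous_on UNIV (pd [True, False] g)" by (rule sm_cont[OF g])
    show "continuous_on UNIV (pd [True, True, False] g)" by (rule sm_cont[OF g])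
    show "pd [True] g (x + 2 * pi, y) = pd [True] g (x, y)" for x y using p by (simp only: per2_def)
    show "pd [True] g (x, y + 2 * pi) = pd [True] g (x, y)" for x y using p by (simp only: per2_def)
    show "((\<lambda>s. pd [True] g (s, y)) has_real_derivative pd [True, True] g (x, y)) (at x)" for x y
      by (rule sm_d1[OF g])
    show "((\<lambda>u. pd [True] g (x, u)) has_real_derivative pd [True, False] g (x, y)) (at y)" for x y
      using sm_d2[OF g, of "[True]" x y] sym[OF g, of x y] by simp
    show "((\<lambda>s. pd [True, False] g (s, y)) has_real_derivative pd [True, True, False] g (x, y)) (at x)" for x y
      by (rule sm_d1[OF g])
  qed
  moreover have "E2 (pd [True] g) \<le> 1" using E2_le_H3[OF h, of 1 0] unfolding pdiff_simps by simp
  moreover have "E2 (pd [True, True] g) \<le> 1" using E2_le_H3[OF h, of 2 0] unfolding pdiff_simps by simp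
  moreover have "E2 (pd [True, False] g) \<le> 1" using E2_le_H3[OF h, of 1 1] unfolding pdiff_simps by simp
  moreover have "E2 (pd [True, True, False] g) \<le> 1" using E2_le_H3[OF h, of 2 1] unfolding pdiff_simps by simp
  ultimately show ?thesis unfolding pdiff_simps by (elim sepb_mono) argo
qed

lemma sepb_d2:
  assumes g: "smooth_T2 g" and h: "H3_norm g \<le> 1"
  shows "sepb (pdiff 0 1 g) 202"
proof -
  have p: "per2 (pd [False] g)" by (rule sm_per[OF g])
  have "sepb (pd [False] g) ((E2 (pd [False] g) + E2 (pd [True, False] g) + E2 (pd [False, False] g) + E2 (pd [True, False, False] g)) / 2 + 200)"
  proof (rule rep)
    show "continuous_on UNIV (pd [False] g)" by (rule sm_cont[OF g])
    show "continuous_on UNIV (pd [True, False] g)" by (rule sm_cont[OF g])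
    show "continuous_on UNIV (pd [False, False] g)" by (rule sm_cont[OF g])
    show "continuous_on UNIV (pd [True, False, False] g)" by (rule sm_cont[OF g])
    show "pd [False] g (x + 2 * pi, y) = pd [False] g (x, y)" for x y using p by (simp only: per2_def)
    show "pd [False] g (x, y + 2 * pi) = pd [False] g (x, y)" for x y using p by (simp only: per2_def)
    show "((\<lambda>s. pd [False] g (s, y)) has_real_derivative pd [True, False] g (x, y)) (at x)" for x y
      by (rule sm_d1[OF g])
    show "((\<lambda>u. pd [False] g (x, u)) has_real_derivative pd [False, False] g (x, y)) (at y)" for x y
      by (rule sm_d2[OF g])
    show "((\<lambda>s. pd [False, False] g (s, y)) has_real_derivative pd [True, False, False] g (x, y)) (at x)" for x y
      by (rule sm_d1[OF g])
  qed
  moreover have "E2 (pd [False] g) \<le> 1" using E2_le_H3[OF h, of 0 1] unfolding pdiff_simps by simp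
  moreover have "E2 (pd [True, False] g) \<le> 1" using E2_le_H3[OF h, of 1 1] unfolding pdiff_simps by simp
  moreover have "E2 (pd [False, False] g) \<le> 1" using E2_le_H3[OF h, of 0 2] unfolding pdiff_simps by simp
  moreover have "E2 (pd [True, False, False] g) \<le> 1" using E2_le_H3[OF h, of 1 2] unfolding pdiff_simps by simp
  ultimately show ?thesis unfolding pdiff_simps by (elim sepb_mono) argo
qed

lemma int_bound:
  fixes f :: "real \<Rightarrow> real"
  assumes t: "0 \<le> t" and b: "\<And>s. s \<in> {0..t} \<Longrightarrow> \<bar>f s\<bar> \<le> M"
  shows "\<bar>integral {0..t} f\<bar> \<le> t * M"
proof (cases "f integrable_on {0..t}")
  case True
  have "norm (integral {0..t} f) \<le> integral {0..t} (\<lambda>s. M)"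
    by (rule integral_norm_bound_integral) (use True b in auto)
  then show ?thesis using t by simp
next
  case False
  have "0 \<le> M" using b[of 0] t by force
  then show ?thesis using False t by (simp add: not_integrable_integral)
qed

lemma scale3:
  fixes X K S :: real
  assumes "\<bar>X\<bar> \<le> K * (real n ^ 3 * S)" "0 \<le> K" "0 \<le> S"
  shows "\<bar>1 / real n ^ 3 * X\<bar> \<le> K * S"
proof (cases "n = 0")
  case True then show ?thesis using assms by simp
next
  case False
  then have np: "real n ^ 3 > 0" by simp
  have "\<bar>1 / real n ^ 3 * X\<bar> = \<bar>X\<bar> / real n ^ 3" using np by (simp add: abs_mult)
  also have "\<dots> \<le> K * (real n ^ 3 * S) / real n ^ 3" by (rule divide_right_mono[OF assms(1)]) (use np in simp)
  also have "\<dots> = K * S" using np by simp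
  finally show ?thesis .
qed

theorem mainTheorem6:
  fixes \<Gamma> :: "real \<times> real \<Rightarrow> real"
  assumes "smooth_T2 \<Gamma>"
  shows "\<exists>C. \<forall>T>0. \<exists>N. \<forall>n\<ge>N. \<forall>(p::real) (\<xi>::nat \<Rightarrow> nat \<Rightarrow> real) (\<theta>::nat \<Rightarrow> real \<Rightarrow> real).
     n \<ge> 2 \<and> 0 < p \<and> p \<le> 1 \<and> (\<forall>i<n. \<forall>j<n. \<xi> i j \<in> {0, 1}) \<and>
     (\<forall>i<n. continuous_on {0..T} (\<theta> i)) \<longrightarrow>
     (SUP t\<in>{0..T}. Hm3_norm (Cn n p \<xi> \<theta> \<Gamma> t))
       \<le> ereal (T * C * (S_ijik n p \<xi> + S_ijjk n p \<xi>))"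
proof -
  define KG where "KG = (E2 \<Gamma> + E2 (pd [True] \<Gamma>) + E2 (pd [False] \<Gamma>) + E2 (pd [True, False] \<Gamma>)) / 2 + 200"
  have sG: "sepb \<Gamma> KG" unfolding KG_def by (rule sepb_Gamma[OF assms])
  have KGnn: "KG \<ge> 0" unfolding KG_def
    using E2_nonneg[of \<Gamma>] E2_nonneg[of "pd [True] \<Gamma>"] E2_nonneg[of "pd [False] \<Gamma>"] E2_nonneg[of "pd [True, False] \<Gamma>"]
    by argo
  define C where "C = 202 * KG"
  have Cnn: "C \<ge> 0" unfolding C_def using KGnn by simp
  have main: "\<bar>Cn n p \<xi> \<theta> \<Gamma> t g\<bar> \<le> T * C * (S_ijik n p \<xi> + S_ijjk n p \<xi>)"
    if g: "smooth_T2 g" and h: "H3_norm g \<le> 1" and t: "t \<in> {0..T}"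
    for n p \<xi> \<theta> g t T
  proof -
    let ?T1 = "\<lambda>i j k. xhat p \<xi> i j * xhat p \<xi> i k"
    let ?T2 = "\<lambda>i j k. xhat p \<xi> i j * xhat p \<xi> j k"
    have S1nn: "Sg n ?T1 \<ge> 0" and S2nn: "Sg n ?T2 \<ge> 0" by (rule Sg_nonneg)+
    have p1: "\<bar>1 / real n ^ 3 * (\<Sum>i<n. \<Sum>j<n. \<Sum>k<n.
        xhat p \<xi> i j * xhat p \<xi> i k * pdiff 1 0 g (\<theta> i s, \<theta> j s) * \<Gamma> (\<theta> i s, \<theta> k s))\<bar>
        \<le> C * Sg n ?T1" for s
    proof -
      have "\<bar>\<Sum>i<n. \<Sum>j<n. \<Sum>k<n.
        xhat p \<xi> i j * xhat p \<xi> i k * pdiff 1 0 g (\<theta> i s, \<theta> j s) * \<Gamma> (\<theta> i s, \<theta> k s)\<bar>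
        \<le> 202 * (KG * (real n ^ 3 * Sg n ?T1))"
        by (rule term1_bound[OF sepb_d1[OF g h] sG]) simp
      then have "\<bar>\<Sum>i<n. \<Sum>j<n. \<Sum>k<n.
        xhat p \<xi> i j * xhat p \<xi> i k * pdiff 1 0 g (\<theta> i s, \<theta> j s) * \<Gamma> (\<theta> i s, \<theta> k s)\<bar>
        \<le> C * (real n ^ 3 * Sg n ?T1)" unfolding C_def by (simp add: mult.assoc)
      then show ?thesis by (rule scale3[OF _ Cnn S1nn])
    qed
    have p2: "\<bar>1 / real n ^ 3 * (\<Sum>i<n. \<Sum>j<n. \<Sum>k<n.
        xhat p \<xi> i j * xhat p \<xi> j k * pdiff 0 1 g (\<theta> i s, \<theta> j s) * \<Gamma> (\<theta> j s, \<theta> k s))\<bar>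
        \<le> C * Sg n ?T2" for s
    proof -
      have "\<bar>\<Sum>i<n. \<Sum>j<n. \<Sum>k<n.
        xhat p \<xi> i j * xhat p \<xi> j k * pdiff 0 1 g (\<theta> i s, \<theta> j s) * \<Gamma> (\<theta> j s, \<theta> k s)\<bar>
        \<le> 202 * (KG * (real n ^ 3 * Sg n ?T2))"
        by (rule term2_bound[OF sepb_d2[OF g h] sG]) simp
      then have "\<bar>\<Sum>i<n. \<Sum>j<n. \<Sum>k<n.
        xhat p \<xi> i j * xhat p \<xi> j k * pdiff 0 1 g (\<theta> i s, \<theta> j s) * \<Gamma> (\<theta> j s, \<theta> k s)\<bar>
        \<le> C * (real n ^ 3 * Sg n ?T2)" unfolding C_def by (simp add: mult.assoc)
      then show ?thesis by (rule scale3[OF _ Cnn S2nn])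
    qed
    have t0: "0 \<le> t" and tT: "t \<le> T" using t by auto
    have i1: "\<bar>integral {0..t} (\<lambda>s. 1 / real n ^ 3 * (\<Sum>i<n. \<Sum>j<n. \<Sum>k<n.
        xhat p \<xi> i j * xhat p \<xi> i k * pdiff 1 0 g (\<theta> i s, \<theta> j s) * \<Gamma> (\<theta> i s, \<theta> k s)))\<bar>
        \<le> t * (C * Sg n ?T1)"
      by (rule int_bound[OF t0]) (rule p1)
    have i2: "\<bar>integral {0..t} (\<lambda>s. 1 / real n ^ 3 * (\<Sum>i<n. \<Sum>j<n. \<Sum>k<n.
        xhat p \<xi> i j * xhat p \<xi> j k * pdiff 0 1 g (\<theta> i s, \<theta> j s) * \<Gamma> (\<theta> j s, \<theta> k s)))\<bar>
        \<le> t * (C * Sg n ?T2)"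
      by (rule int_bound[OF t0]) (rule p2)
    have "\<bar>Cn n p \<xi> \<theta> \<Gamma> t g\<bar> \<le> t * (C * Sg n ?T1) + t * (C * Sg n ?T2)"
      unfolding Cn_def using i1 i2 by linarith
    also have "\<dots> \<le> T * (C * Sg n ?T1) + T * (C * Sg n ?T2)"
      by (intro add_mono mult_right_mono tT mult_nonneg_nonneg Cnn S1nn S2nn)
    also have "\<dots> = T * C * (S_ijik n p \<xi> + S_ijjk n p \<xi>)"
      unfolding S_ijik_Sg S_ijjk_Sg by (simp add: algebra_simps)
    finally show ?thesis .
  qed
  show ?thesis
  proof (intro exI[of _ C] allI impI)
    fix T :: real assume "T > 0"
    show "\<exists>N. \<forall>n\<ge>N. \<forall>(p::real) (\<xi>::nat \<Rightarrow> nat \<Rightarrow> real) (\<theta>::nat \<Rightarrow> real \<Rightarrow> real).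
     n \<ge> 2 \<and> 0 < p \<and> p \<le> 1 \<and> (\<forall>i<n. \<forall>j<n. \<xi> i j \<in> {0, 1}) \<and>
     (\<forall>i<n. continuous_on {0..T} (\<theta> i)) \<longrightarrow>
     (SUP t\<in>{0..T}. Hm3_norm (Cn n p \<xi> \<theta> \<Gamma> t))
       \<le> ereal (T * C * (S_ijik n p \<xi> + S_ijjk n p \<xi>))"
    proof (intro exI[of _ "0::nat"] allI impI)
      fix n :: nat and p :: real and \<xi> :: "nat \<Rightarrow> nat \<Rightarrow> real" and \<theta> :: "nat \<Rightarrow> real \<Rightarrow> real"
      show "(SUP t\<in>{0..T}. Hm3_norm (Cn n p \<xi> \<theta> \<Gamma> t)) \<le> ereal (T * C * (S_ijik n p \<xi> + S_ijjk n p \<xi>))"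
      proof (rule SUP_least)
        fix t assume t: "t \<in> {0..T}"
        show "Hm3_norm (Cn n p \<xi> \<theta> \<Gamma> t) \<le> ereal (T * C * (S_ijik n p \<xi> + S_ijjk n p \<xi>))"
          unfolding Hm3_norm_def
        proof (rule SUP_least)
          fix g assume "g \<in> {g. smooth_T2 g \<and> H3_norm g \<le> 1}"
          then show "ereal \<bar>Cn n p \<xi> \<theta> \<Gamma> t g\<bar> \<le> ereal (T * C * (S_ijik n p \<xi> + S_ijjk n p \<xi>))"
            using main[of g t T n p \<xi> \<theta>] t by simp
        qed
      qed
    qed
  qed
qed


end
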